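(* Let $q$ be a self-join-free Boolean conjunctive query and let $\mathbf{db}$ be a database. Let $A,B\in\mathbf{db}$. (1) If $A\hookrightarrow B$, then $A\hookrightarrow B'$ for every fact $B'\in\mathbf{db}$ key-equal to $B$. (2) If $A\hookrightarrow B$, $A\hookrightarrow B'$ and $\mathrm{atom}(B)=\mathrm{atom}(B')$, then $B$ and $B'$ are key-equal.
   Context: Every relation name has a signature $[n,k]$ ($1\le k\le n$; primary-key positions $1,\dots,k$) and a mode in $\{\mathsf{c},\mathsf{i}\}$. For an atom $F$, $\mathrm{key}(F)$ = variables at primary-key positions, $\mathrm{vars}(F)$ = all its variables. Facts are variable-free atoms; facts are key-equal if same relation name and same primary-key values. A database is a finite set of facts with no two distinct key-equal facts of mode $\mathsf{c}$; all relation names of facts in $\mathbf{db}$ occur in $q$. A self-join-free Boolean conjunctive query is a finite set of atoms with distinct relation names. For a fact $A$, $\mathrm{atom}(A)$ is the atom of $q$ with the same relation name. $\mathcal{K}(p)=\{\mathrm{key}(F)\to\mathrm{vars}(F)\mid F\in p\}$ (FDs over variables), $q^{\mathsf{c}}$ = atoms of $q$ of mode $\mathsf{c}$. The M-graph of $q$: vertices atoms of $q$, edge $F\to G$ ($F\ne G$) iff $\mathcal{K}(q^{\mathsf{c}})\models\mathrm{vars}(F)\to\mathrm{key}(G)$. The $\hookrightarrow$-graph of $\mathbf{db}$ has the facts of $\mathbf{db}$ as vertices and an edge $A\hookrightarrow B$ iff there are a valuation $\theta$ of the variables of $q$ and an M-graph edge $F\to G$ with $\theta(q)\subseteq\mathbf{db}$,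 $A=\theta(F)$ and $B$ key-equal to $\theta(G)$. *)

theory Defs
  imports Main
begin

text \<open>Terms at atom positions: variables or constants. Relation names have type 'r,
  a signature function sig :: 'r => nat * nat gives (n,k), and md :: 'r => mode gives the mode.\<close>

datatype ('v,'c) trm = Var 'v | Cst 'c

datatype mode = ModeC | ModeI

type_synonym ('r,'v,'c) atom = "'r \<times> ('v,'c) trm list"
type_synonym ('r,'c) fact = "'r \<times> 'c list"

definition arity :: "('r \<Rightarrow> nat \<times> nat) \<Rightarrow> 'r \<Rightarrow> nat" where
  "arity sig r = fst (sig r)"

definition keylen :: "('r \<Rightarrow> nat \<times> nat) \<Rightarrow> 'r \<Rightarrow> nat" where
  "keylen sig r = snd (sig r)"

definition key_vars :: "('r \<Rightarrow> nat \<times> nat) \<Rightarrow> ('r,'v,'c) atom \<Rightarrow> 'v set" where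
  "key_vars sig F = {v. Var v \<in> set (take (keylen sig (fst F)) (snd F))}"

definition vars :: "('r,'v,'c) atom \<Rightarrow> 'v set" where
  "vars F = {v. Var v \<in> set (snd F)}"

definition fact_key :: "('r \<Rightarrow> nat \<times> nat) \<Rightarrow> ('r,'c) fact \<Rightarrow> 'c list" where
  "fact_key sig A = take (keylen sig (fst A)) (snd A)"

definition key_equal :: "('r \<Rightarrow> nat \<times> nat) \<Rightarrow> ('r,'c) fact \<Rightarrow> ('r,'c) fact \<Rightarrow> bool" where
  "key_equal sig A B \<longleftrightarrow> fst A = fst B \<and> fact_key sig A = fact_key sig B"

definition inst :: "('v \<Rightarrow> 'c) \<Rightarrow> ('r,'v,'c) atom \<Rightarrow> ('r,'c) fact" where
  "inst \<theta> F = (fst F, map (\<lambda>t. case t of Var v \<Rightarrow> \<theta> v | Cst c \<Rightarrow> c) (snd F))"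

definition wf_sig :: "('r \<Rightarrow> nat \<times> nat) \<Rightarrow> bool" where
  "wf_sig sig \<longleftrightarrow> (\<forall>r. 1 \<le> keylen sig r \<and> keylen sig r \<le> arity sig r)"

definition sjf_query :: "('r \<Rightarrow> nat \<times> nat) \<Rightarrow> ('r,'v,'c) atom set \<Rightarrow> bool" where
  "sjf_query sig q \<longleftrightarrow> finite q
     \<and> (\<forall>F\<in>q. \<forall>G\<in>q. fst F = fst G \<longrightarrow> F = G)
     \<and> (\<forall>F\<in>q. length (snd F) = arity sig (fst F))"

definition database :: "('r \<Rightarrow> nat \<times> nat) \<Rightarrow> ('r \<Rightarrow> mode) \<Rightarrow> ('r,'v,'c) atom set
      \<Rightarrow> ('r,'c) fact set \<Rightarrow> bool" where
  "database sig md q db \<longleftrightarrow> finite db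
     \<and> (\<forall>A\<in>db. length (snd A) = arity sig (fst A))
     \<and> (\<forall>A\<in>db. \<forall>B\<in>db. md (fst A) = ModeC \<and> key_equal sig A B \<longrightarrow> A = B)
     \<and> (\<forall>A\<in>db. \<exists>F\<in>q. fst F = fst A)"

definition atom_of :: "('r,'v,'c) atom set \<Rightarrow> ('r,'c) fact \<Rightarrow> ('r,'v,'c) atom" where
  "atom_of q A = (THE F. F \<in> q \<and> fst F = fst A)"

type_synonym 'v fd = "'v set \<times> 'v set"

definition Kfds :: "('r \<Rightarrow> nat \<times> nat) \<Rightarrow> ('r,'v,'c) atom set \<Rightarrow> 'v fd set" where
  "Kfds sig p = {(key_vars sig F, vars F) | F. F \<in> p}"

inductive_set fd_closure :: "'v fd set \<Rightarrow> 'v set \<Rightarrow> 'v set" for \<Sigma> X where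
  base: "x \<in> X \<Longrightarrow> x \<in> fd_closure \<Sigma> X"
| step: "(L, R) \<in> \<Sigma> \<Longrightarrow> (\<And>l. l \<in> L \<Longrightarrow> l \<in> fd_closure \<Sigma> X) \<Longrightarrow> y \<in> R \<Longrightarrow> y \<in> fd_closure \<Sigma> X"

definition fd_implies :: "'v fd set \<Rightarrow> 'v set \<Rightarrow> 'v set \<Rightarrow> bool" where
  "fd_implies \<Sigma> X Y \<longleftrightarrow> Y \<subseteq> fd_closure \<Sigma> X"

definition qc :: "('r \<Rightarrow> mode) \<Rightarrow> ('r,'v,'c) atom set \<Rightarrow> ('r,'v,'c) atom set" where
  "qc md q = {F \<in> q. md (fst F) = ModeC}"

definition mgraph_edge :: "('r \<Rightarrow> nat \<times> nat) \<Rightarrow> ('r \<Rightarrow> mode) \<Rightarrow> ('r,'v,'c) atom set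
      \<Rightarrow> ('r,'v,'c) atom \<Rightarrow> ('r,'v,'c) atom \<Rightarrow> bool" where
  "mgraph_edge sig md q F G \<longleftrightarrow> F \<in> q \<and> G \<in> q \<and> F \<noteq> G
     \<and> fd_implies (Kfds sig (qc md q)) (vars F) (key_vars sig G)"

definition hook :: "('r \<Rightarrow> nat \<times> nat) \<Rightarrow> ('r \<Rightarrow> mode) \<Rightarrow> ('r,'v,'c) atom set
      \<Rightarrow> ('r,'c) fact set \<Rightarrow> ('r,'c) fact \<Rightarrow> ('r,'c) fact \<Rightarrow> bool" where
  "hook sig md q db A B \<longleftrightarrow> A \<in> db \<and> B \<in> db \<and>
     (\<exists>(\<theta> :: 'v \<Rightarrow> 'c) F G. mgraph_edge sig md q F G \<and> inst \<theta> ` q \<subseteq> db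
        \<and> A = inst \<theta> F \<and> key_equal sig B (inst \<theta> G))"

end

theory Submission
  imports Defs
begin

lemma map_inst_eq:
  assumes "\<And>v. Var v \<in> set xs \<Longrightarrow> \<theta> v = \<theta>' v"
  shows "map (\<lambda>t. case t of Var v \<Rightarrow> \<theta> v | Cst c \<Rightarrow> c) xs
       = map (\<lambda>t. case t of Var v \<Rightarrow> \<theta>' v | Cst c \<Rightarrow> c) xs"
  using assms by (intro map_cong) (auto split: trm.split)

lemma agree_from_inst:
  assumes "inst \<theta> F = inst \<theta>' F" "v \<in> vars F"
  shows "\<theta> v = \<theta>' v"
proof -
  from assms(2) have "Var v \<in> set (snd F)" by (simp add: vars_def)
  then obtain i where i: "i < length (snd F)" "snd F ! i = Var v" by (metis in_set_conv_nth)
  from assms(1) have "map (\<lambda>t. case t of Var v \<Rightarrow> \<theta> v | Cst c \<Rightarrow> c) (snd F)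
     = map (\<lambda>t. case t of Var v \<Rightarrow> \<theta>' v | Cst c \<Rightarrow> c) (snd F)"
    unfolding inst_def by (metis snd_conv)
  then have "map (\<lambda>t. case t of Var v \<Rightarrow> \<theta> v | Cst c \<Rightarrow> c) (snd F) ! i
     = map (\<lambda>t. case t of Var v \<Rightarrow> \<theta>' v | Cst c \<Rightarrow> c) (snd F) ! i" by argo
  with i show ?thesis by simp
qed

lemma key_inst_eq:
  assumes "\<And>v. v \<in> key_vars sig G \<Longrightarrow> \<theta> v = \<theta>' v"
  shows "fact_key sig (inst \<theta> G) = fact_key sig (inst \<theta>' G)"
proof -
  have "map (\<lambda>t. case t of Var v \<Rightarrow> \<theta> v | Cst c \<Rightarrow> c) (take (keylen sig (fst G)) (snd G))
       = map (\<lambda>t. case t of Var v \<Rightarrow> \<theta>' v | Cst c \<Rightarrow> c) (take (keylen sig (fst G)) (snd G))"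
    by (rule map_inst_eq) (use assms in \<open>auto simp: key_vars_def\<close>)
  then show ?thesis by (simp add: fact_key_def inst_def take_map)
qed

lemma closure_agree:
  assumes db: "database sig md q db"
    and s1: "inst \<theta> ` q \<subseteq> db" and s2: "inst \<theta>' ` q \<subseteq> db"
    and x: "x \<in> fd_closure (Kfds sig (qc md q)) X"
    and base: "\<And>v. v \<in> X \<Longrightarrow> \<theta> v = \<theta>' v"
  shows "\<theta> x = \<theta>' x"
  using x
proof (induction rule: fd_closure.induct)
  case (base x) then show ?case using assms by blast
next
  case (step L R y)
  from step.hyps(1) obtain H where H: "H \<in> qc md q" "L = key_vars sig H" "R = vars H"
    by (auto simp: Kfds_def)
  have "fact_key sig (inst \<theta> H) = fact_key sig (inst \<theta>' H)"
    using step.IH H by (intro key_inst_eq) auto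
  moreover have "fst (inst \<theta> H) = fst (inst \<theta>' H)" by (simp add: inst_def)
  moreover have "inst \<theta> H \<in> db" "inst \<theta>' H \<in> db" using H s1 s2 by (auto simp: qc_def)
  moreover have "md (fst (inst \<theta> H)) = ModeC" using H by (simp add: qc_def inst_def)
  ultimately have "inst \<theta> H = inst \<theta>' H" using db
    unfolding database_def key_equal_def by blast
  then show ?case using agree_from_inst step.hyps(3) H by metis
qed

lemma atom_of_eq:
  assumes "sjf_query sig q" "G \<in> q" "fst G = fst B"
  shows "atom_of q B = G"
  unfolding atom_of_def
  using assms by (intro the_equality) (auto simp: sjf_query_def)

theorem lemma13:
  fixes sig :: "'r \<Rightarrow> nat \<times> nat" and md :: "'r \<Rightarrow> mode"
    and q :: "('r,'v,'c) atom set" and db :: "('r,'c) fact set"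
    and A B :: "('r,'c) fact"
  assumes "wf_sig sig" and "sjf_query sig q" and "database sig md q db"
    and "A \<in> db" and "B \<in> db"
  shows "(hook sig md q db A B \<longrightarrow> (\<forall>B'\<in>db. key_equal sig B' B \<longrightarrow> hook sig md q db A B'))
       \<and> (\<forall>B'. hook sig md q db A B \<and> hook sig md q db A B' \<and> atom_of q B = atom_of q B'
              \<longrightarrow> key_equal sig B B')"
proof (intro conjI impI ballI allI)
  fix B' assume "hook sig md q db A B" "B' \<in> db" "key_equal sig B' B"
  then show "hook sig md q db A B'"
    unfolding hook_def key_equal_def by metis
next
  fix B' assume h: "hook sig md q db A B \<and> hook sig md q db A B' \<and> atom_of q B = atom_of q B'"
  then obtain \<theta> :: "'v \<Rightarrow> 'c" and F G where
    e1: "mgraph_edge sig md q F G" "inst \<theta> ` q \<subseteq> db" "A = inst \<theta> F" "key_equal sig B (inst \<theta> G)"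
    unfolding hook_def by blast
  from h obtain \<theta>' :: "'v \<Rightarrow> 'c" and F' G' where
    e2: "mgraph_edge sig md q F' G'" "inst \<theta>' ` q \<subseteq> db" "A = inst \<theta>' F'" "key_equal sig B' (inst \<theta>' G')"
    unfolding hook_def by blast
  have G: "G \<in> q" "F \<in> q" using e1 by (auto simp: mgraph_edge_def)
  have G': "G' \<in> q" "F' \<in> q" using e2 by (auto simp: mgraph_edge_def)
  have "atom_of q B = G" using atom_of_eq[OF assms(2) G(1)] e1(4)
    by (simp add: key_equal_def inst_def)
  moreover have "atom_of q B' = G'" using atom_of_eq[OF assms(2) G'(1)] e2(4)
    by (simp add: key_equal_def inst_def)
  ultimately have GG: "G' = G" using h by simp
  have "fst F = fst F'" using e1(3) e2(3) by (simp add: inst_def)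
  then have FF: "F' = F" using G G' assms(2) by (auto simp: sjf_query_def)
  have ag: "\<And>v. v \<in> vars F \<Longrightarrow> \<theta> v = \<theta>' v"
    using agree_from_inst e1(3) e2(3) FF by metis
  have "\<And>v. v \<in> key_vars sig G \<Longrightarrow> \<theta> v = \<theta>' v"
  proof -
    fix v assume "v \<in> key_vars sig G"
    then have "v \<in> fd_closure (Kfds sig (qc md q)) (vars F)"
      using e1(1) by (auto simp: mgraph_edge_def fd_implies_def)
    then show "\<theta> v = \<theta>' v" using closure_agree[OF assms(3) e1(2) e2(2)] ag by blast
  qed
  then have "fact_key sig (inst \<theta> G) = fact_key sig (inst \<theta>' G)" by (rule key_inst_eq)
  then show "key_equal sig B B'" using e1(4) e2(4) GG
    by (simp add: key_equal_def inst_def)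
qed

end
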